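(* Let $(X,\leq)$ be a poset and $K$ a field. (1) If $FI(X,K)$ is Lie solvable, then ${\rm dl}_{Lie}(FI(X,K))={\rm dl}^{Lie}(FI(X,K))=\lceil \log_2(l(X)+1)\rceil+1$. (2) If $\mathcal{U}(FI(X,K))$ is solvable and $K\neq\mathbb{F}_2$, then ${\rm dl}(\mathcal{U}(FI(X,K)))=\lceil \log_2(l(X)+1)\rceil+1$.
   Context: $FI(X,K)$ is the finitary incidence algebra: the $K$-vector space of formal sums $\alpha=\sum_{x\leq y}\alpha_{xy}e_{xy}$ ($x,y\in X$, $\alpha_{xy}\in K$) such that for every pair $x<y$ only finitely many $x\leq u<v\leq y$ have $\alpha_{uv}\neq0$, with convolution product $\alpha\beta=\sum_{x\leq y}\big(\sum_{x\leq z\leq y}\alpha_{xz}\beta_{zy}\big)e_{xy}$; $\mathcal{U}(FI(X,K))$ is its group of units. For a unital associative algebra $A$ with $[x,y]=xy-yx$ (and $UV$, $[U,V]$ denoting spans of products, commutators of elements of subspaces $U,V$): $A^{[0]}=A$, $A^{[n+1]}=[A^{[n]},A^{[n]}]$; $A^{(0)}=A$, $A^{(n+1)}=[A^{(n)},A^{(n)}]A$. $A$ is Lie solvable if some $A^{[n]}=\{0\}$, and then ${\rm dl}_{Lie}(A)$ is the minimal such $n$; ${\rm dl}^{Lie}(A)$ is the minimal $n$ with $A^{(n)}=\{0\}$. For a solvable group $G$, ${\rm dl}(G)$ is its derived length (minimal $n$ with $G^{(n)}$ trivial, $G^{(n)}$ the derived series). $l(X)$ is the supremum of $|C|-1$ over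 finite chains $C\subseteq X$. $\mathbb{F}_2$ is the field with two elements; $\lceil t\rceil$ is the ceiling. *)

theory Defs
  imports Complex_Main "HOL-Algebra.Solvable_Groups" "HOL-Library.Extended_Nat"
begin

text \<open>The poset X is the ambient type 'a of class order; elements of the incidence
  algebra are functions alpha :: 'a => 'a => 'k with alpha x y the coefficient of e_xy.\<close>

definition FI :: "('a::order \<Rightarrow> 'a \<Rightarrow> 'k::field) set" where
  "FI = {\<alpha>. (\<forall>x y. \<not> x \<le> y \<longrightarrow> \<alpha> x y = 0) \<and>
            (\<forall>x y. x < y \<longrightarrow>
               finite {(u, v). x \<le> u \<and> u < v \<and> v \<le> y \<and> \<alpha> u v \<noteq> 0})}"

text \<open>Convolution product; for finitary series the sum has only finitely many nonzero terms.\<close>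
definition fi_mult :: "('a::order \<Rightarrow> 'a \<Rightarrow> 'k::field) \<Rightarrow> ('a \<Rightarrow> 'a \<Rightarrow> 'k) \<Rightarrow> ('a \<Rightarrow> 'a \<Rightarrow> 'k)" where
  "fi_mult \<alpha> \<beta> = (\<lambda>x y. if x \<le> y then
      (\<Sum>z \<in> {z. x \<le> z \<and> z \<le> y \<and> \<alpha> x z * \<beta> z y \<noteq> 0}. \<alpha> x z * \<beta> z y) else 0)"

definition fi_one :: "'a::order \<Rightarrow> 'a \<Rightarrow> 'k::field" where
  "fi_one = (\<lambda>x y. if x = y then 1 else 0)"

definition fi_zero :: "'a \<Rightarrow> 'a \<Rightarrow> 'k::field" where
  "fi_zero = (\<lambda>x y. 0)"

definition fi_comm :: "('a::order \<Rightarrow> 'a \<Rightarrow> 'k::field) \<Rightarrow> ('a \<Rightarrow> 'a \<Rightarrow> 'k) \<Rightarrow> ('a \<Rightarrow> 'a \<Rightarrow> 'k)" where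
  "fi_comm \<alpha> \<beta> = (\<lambda>x y. fi_mult \<alpha> \<beta> x y - fi_mult \<beta> \<alpha> x y)"

inductive_set fspan :: "('a \<Rightarrow> 'a \<Rightarrow> 'k::field) set \<Rightarrow> ('a \<Rightarrow> 'a \<Rightarrow> 'k) set"
  for S where
    zero: "fi_zero \<in> fspan S"
  | base: "s \<in> S \<Longrightarrow> s \<in> fspan S"
  | add: "a \<in> fspan S \<Longrightarrow> b \<in> fspan S \<Longrightarrow> (\<lambda>x y. a x y + b x y) \<in> fspan S"
  | smult: "a \<in> fspan S \<Longrightarrow> (\<lambda>x y. c * a x y) \<in> fspan S"

definition lie_br :: "('a::order \<Rightarrow> 'a \<Rightarrow> 'k::field) set \<Rightarrow> ('a \<Rightarrow> 'a \<Rightarrow> 'k) set \<Rightarrow> ('a \<Rightarrow> 'a \<Rightarrow> 'k) set" where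
  "lie_br U V = fspan {fi_comm u v | u v. u \<in> U \<and> v \<in> V}"

definition prod_sp :: "('a::order \<Rightarrow> 'a \<Rightarrow> 'k::field) set \<Rightarrow> ('a \<Rightarrow> 'a \<Rightarrow> 'k) set \<Rightarrow> ('a \<Rightarrow> 'a \<Rightarrow> 'k) set" where
  "prod_sp U V = fspan {fi_mult u v | u v. u \<in> U \<and> v \<in> V}"

fun lie_der :: "nat \<Rightarrow> ('a::order \<Rightarrow> 'a \<Rightarrow> 'k::field) set" where
  "lie_der 0 = FI"
| "lie_der (Suc n) = lie_br (lie_der n) (lie_der n)"

fun strong_lie_der :: "nat \<Rightarrow> ('a::order \<Rightarrow> 'a \<Rightarrow> 'k::field) set" where
  "strong_lie_der 0 = FI"
| "strong_lie_der (Suc n) = prod_sp (lie_br (strong_lie_der n) (strong_lie_der n)) FI"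

definition FI_lie_solvable :: "('a::order \<Rightarrow> 'a \<Rightarrow> 'k::field) itself \<Rightarrow> bool" where
  "FI_lie_solvable _ \<longleftrightarrow> (\<exists>n. (lie_der n :: ('a \<Rightarrow> 'a \<Rightarrow> 'k) set) = {fi_zero})"

definition dl_Lie :: "('a::order \<Rightarrow> 'a \<Rightarrow> 'k::field) itself \<Rightarrow> nat" where
  "dl_Lie _ = (LEAST n. (lie_der n :: ('a \<Rightarrow> 'a \<Rightarrow> 'k) set) = {fi_zero})"

definition dl_strong_Lie :: "('a::order \<Rightarrow> 'a \<Rightarrow> 'k::field) itself \<Rightarrow> nat" where
  "dl_strong_Lie _ = (LEAST n. (strong_lie_der n :: ('a \<Rightarrow> 'a \<Rightarrow> 'k) set) = {fi_zero})"

definition FI_monoid :: "('a::order \<Rightarrow> 'a \<Rightarrow> 'k::field) monoid" where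
  "FI_monoid = \<lparr>carrier = FI, mult = fi_mult, one = fi_one\<rparr>"

definition FI_units :: "('a::order \<Rightarrow> 'a \<Rightarrow> 'k::field) monoid" where
  "FI_units = units_of FI_monoid"

definition derived_length :: "('g, 'b) monoid_scheme \<Rightarrow> nat" where
  "derived_length G = (LEAST n. (derived G ^^ n) (carrier G) = {\<one>\<^bsub>G\<^esub>})"

definition poset_length :: "'a::order itself \<Rightarrow> enat" where
  "poset_length _ = Sup {enat (card C - 1) | C :: 'a set.
      finite C \<and> C \<noteq> {} \<and> (\<forall>x\<in>C. \<forall>y\<in>C. x \<le> y \<or> y \<le> x)}"

end

theory Submission
  imports Defs
begin


fun P :: "nat \<Rightarrow> 'a::order \<Rightarrow> 'a \<Rightarrow> bool" where
  "P 0 x y = (x \<le> y)"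
| "P (Suc k) x y = (\<exists>z. x < z \<and> P k z y)"

lemma P_le: "P k x y \<Longrightarrow> x \<le> y"
  by (induction k arbitrary: x) (auto intro: order.trans less_imp_le)

lemma P_mono_right: "P k x z \<Longrightarrow> z \<le> y \<Longrightarrow> P k x y"
  by (induction k arbitrary: x) auto

lemma P_trans: "P k x z \<Longrightarrow> P j z y \<Longrightarrow> P (k+j) x y"
proof (induction k arbitrary: x)
  case 0 thus ?case
    by (cases j) (auto intro: order.trans order.strict_trans1)
qed auto

lemma P_le_k: "P (k+j) x y \<Longrightarrow> P k x y"
  by (induction k arbitrary: x) (auto dest: P_le)

lemma P_le_k': "P n x y \<Longrightarrow> k \<le> n \<Longrightarrow> P k x y"
  using P_le_k[of k "n-k"] by auto

lemma P_split: "P (k+j) x y \<Longrightarrow> \<exists>z. P k x z \<and> P j z y"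
proof (induction k arbitrary: x)
  case 0 thus ?case by auto
next
  case (Suc k)
  then obtain z' where "x < z'" "P (k+j) z' y" by auto
  with Suc.IH obtain z where "P k z' z" "P j z y" by blast
  thus ?case using \<open>x < z'\<close> by auto
qed

definition is_chain :: "'a::order set \<Rightarrow> bool" where
  "is_chain C \<longleftrightarrow> (\<forall>x\<in>C. \<forall>y\<in>C. x \<le> y \<or> y \<le> x)"

lemma P_chain: "P k x y \<Longrightarrow> \<exists>C. finite C \<and> card C = Suc k \<and> is_chain C \<and> (\<forall>c\<in>C. x \<le> c)"
proof (induction k arbitrary: x)
  case 0 thus ?case by (intro exI[of _ "{x}"]) (auto simp: is_chain_def)
next
  case (Suc k)
  then obtain z where z: "x < z" "P k z y" by auto
  with Suc.IH obtain C where C: "finite C" "card C = Suc k" "is_chain C" "\<forall>c\<in>C. z \<le> c" by blast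
  have "x \<notin> C" using C(4) z(1) by auto
  show ?case
    apply (intro exI[of _ "insert x C"])
    using C z \<open>x \<notin> C\<close> by (auto simp: is_chain_def intro: order.trans less_imp_le)
qed

lemma chain_least:
  assumes "finite C" "C \<noteq> {}" "is_chain C" shows "\<exists>a\<in>C. \<forall>c\<in>C. a \<le> c"
proof -
  obtain a where a: "a \<in> C" "\<forall>b\<in>C. b \<le> a \<longrightarrow> a = b"
    using finite_has_minimal[OF assms(1,2)] by blast
  thus ?thesis using assms(3) unfolding is_chain_def by metis
qed

lemma chain_P: "finite C \<Longrightarrow> is_chain C \<Longrightarrow> card C = Suc k \<Longrightarrow> \<exists>x\<in>C. \<exists>y. P k x y"
proof (induction k arbitrary: C)
  case 0 thus ?case by (auto simp: card_Suc_eq)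
next
  case (Suc k)
  have "C \<noteq> {}" using Suc.prems by auto
  then obtain a where a: "a \<in> C" "\<forall>c\<in>C. a \<le> c" using chain_least Suc.prems by blast
  have "finite (C - {a})" "is_chain (C - {a})" "card (C - {a}) = Suc k"
    using Suc.prems a by (auto simp: is_chain_def)
  then obtain x y where "x \<in> C - {a}" "P k x y" using Suc.IH by blast
  moreover have "a < x" using a \<open>x \<in> C - {a}\<close> by (auto simp: order.order_iff_strict)
  ultimately have "P (Suc k) a y" by (metis P.simps(2))
  thus ?case using a(1) by blast
qed

lemma PL_def': "poset_length TYPE('a::order) = Sup {enat (card C - 1) | C :: 'a set. finite C \<and> C \<noteq> {} \<and> is_chain C}"
  unfolding poset_length_def is_chain_def by simp

lemma P_PL: "P k (x::'a::order) y \<Longrightarrow> enat k \<le> poset_length TYPE('a)"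
proof -
  assume "P k x y"
  then obtain C :: "'a set" where C: "finite C" "card C = Suc k" "is_chain C"
    using P_chain by blast
  have "C \<noteq> {}" using C(2) by auto
  hence "enat (card C - 1) \<in> {enat (card C - 1) | C :: 'a set. finite C \<and> C \<noteq> {} \<and> is_chain C}"
    using C by blast
  hence "enat (card C - 1) \<le> poset_length TYPE('a)" unfolding PL_def' by (rule Sup_upper)
  thus ?thesis using C(2) by simp
qed

lemma PL_bounded:
  assumes "\<And>k (x::'a::order) y. P k x y \<Longrightarrow> k \<le> B"
  shows "\<exists>m. poset_length TYPE('a) = enat m"
proof -
  have "poset_length TYPE('a) \<le> enat B"
    unfolding PL_def'
  proof (rule Sup_least)
    fix s assume "s \<in> {enat (card C - 1) | C :: 'a set. finite C \<and> C \<noteq> {} \<and> is_chain C}"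
    then obtain C :: "'a set" where C: "finite C" "C \<noteq> {}" "is_chain C" "s = enat (card C - 1)"
      by blast
    have c0: "card C > 0" using C(1,2) by (simp add: card_gt_0_iff)
    hence "card C = Suc (card C - 1)" by simp
    from chain_P[OF C(1) C(3) this] obtain x y where "P (card C - 1) (x::'a) y" by metis
    hence "card C - 1 \<le> B" by (rule assms)
    thus "s \<le> enat B" using C(4) by simp
  qed
  thus ?thesis by (cases "poset_length TYPE('a)") auto
qed

lemma PL_attained:
  assumes "poset_length TYPE('a::order) = enat m"
  shows "\<exists>x y::'a. P m x y"
proof -
  define S where "S = {enat (card C - 1) | C :: 'a set. finite C \<and> C \<noteq> {} \<and> is_chain C}"
  have S: "Sup S = enat m" using assms unfolding PL_def' S_def by simp
  have "S \<subseteq> enat ` {..m}"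
  proof
    fix s assume "s \<in> S"
    hence "s \<le> Sup S" by (rule Sup_upper)
    with \<open>s \<in> S\<close> S show "s \<in> enat ` {..m}" unfolding S_def by auto
  qed
  hence fin: "finite S" by (rule finite_subset) auto
  have "{undefined} \<in> {C :: 'a set. finite C \<and> C \<noteq> {} \<and> is_chain C}" by (auto simp: is_chain_def)
  hence ne: "S \<noteq> {}" unfolding S_def by blast
  have "Sup S \<in> S" using cSup_eq_Max[OF fin ne] Max_in[OF fin ne] by simp
  then obtain C :: "'a set" where C: "finite C" "C \<noteq> {}" "is_chain C" "enat (card C - 1) = enat m"
    using S unfolding S_def by auto
  have c0: "card C > 0" using C(1,2) by (simp add: card_gt_0_iff)
  have "card C - 1 = m" using C(4) by simp
  hence "card C = Suc m" using c0 by linarith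
  from chain_P[OF C(1) C(3) this] show ?thesis by metis
qed



definition tri :: "('a::order \<Rightarrow> 'a \<Rightarrow> 'k::field) \<Rightarrow> bool" where
  "tri f \<longleftrightarrow> (\<forall>a b. f a b \<noteq> 0 \<longrightarrow> a \<le> b)"

lemma FI_tri: "f \<in> FI \<Longrightarrow> tri f"
  unfolding FI_def tri_def by blast

lemma mult_tri: "tri (fi_mult f g)"
  unfolding tri_def fi_mult_def by auto

lemma sumrow:
  assumes "tri f" "tri g" "finite T"
    "\<And>z. u \<le> z \<Longrightarrow> z \<le> v \<Longrightarrow> f u z * g z v \<noteq> 0 \<Longrightarrow> z \<in> T"
  shows "fi_mult f g u v = (\<Sum>z\<in>T. f u z * g z v)"
proof (cases "u \<le> v")
  case True
  let ?N = "{z. u \<le> z \<and> z \<le> v \<and> f u z * g z v \<noteq> 0}"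
  have sub: "?N \<subseteq> T" using assms(4) by blast
  have "(\<Sum>z\<in>?N. f u z * g z v) = (\<Sum>z\<in>T. f u z * g z v)"
  proof (rule sum.mono_neutral_left[OF assms(3) sub])
    show "\<forall>i\<in>T - ?N. f u i * g i v = 0"
    proof
      fix i assume "i \<in> T - ?N"
      thus "f u i * g i v = 0" using assms(1,2) unfolding tri_def by fastforce
    qed
  qed
  thus ?thesis using True unfolding fi_mult_def by simp
next
  case False
  have "\<forall>z\<in>T. f u z * g z v = 0"
  proof
    fix z assume "z \<in> T"
    show "f u z * g z v = 0"
    proof (rule ccontr)
      assume "f u z * g z v \<noteq> 0"
      hence "u \<le> z" "z \<le> v" using assms(1,2) unfolding tri_def by auto
      thus False using False by (meson order.trans)
    qed
  qed
  hence "(\<Sum>z\<in>T. f u z * g z v) = 0" by (rule sum.neutral)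
  thus ?thesis using False unfolding fi_mult_def by simp
qed

lemma mult_nonzero:
  assumes "fi_mult f g u v \<noteq> 0"
  shows "\<exists>z. u \<le> z \<and> z \<le> v \<and> f u z \<noteq> 0 \<and> g z v \<noteq> 0"
proof -
  have uv: "u \<le> v" using assms unfolding fi_mult_def by (auto split: if_splits)
  hence "(\<Sum>z \<in> {z. u \<le> z \<and> z \<le> v \<and> f u z * g z v \<noteq> 0}. f u z * g z v) \<noteq> 0"
    using assms unfolding fi_mult_def by simp
  hence "{z. u \<le> z \<and> z \<le> v \<and> f u z * g z v \<noteq> 0} \<noteq> {}" by (metis sum.empty)
  thus ?thesis by auto
qed

lemma mult_diag:
  assumes "tri f" "tri g" shows "fi_mult f g a a = f a a * g a a"
proof -
  have "fi_mult f g a a = (\<Sum>z\<in>{a}. f a z * g z a)"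
    by (rule sumrow[OF assms]) auto
  thus ?thesis by simp
qed

lemma FI_row_finite:
  assumes "f \<in> FI" shows "finite {z. u \<le> z \<and> z \<le> v \<and> f u z \<noteq> 0}"
proof (cases "u < v")
  case True
  let ?S = "{(p, q). u \<le> p \<and> p < q \<and> q \<le> v \<and> f p q \<noteq> 0}"
  have "finite ?S" using assms True unfolding FI_def by blast
  moreover have "{z. u \<le> z \<and> z \<le> v \<and> f u z \<noteq> 0} \<subseteq> insert u (snd ` ?S)"
  proof
    fix z assume z: "z \<in> {z. u \<le> z \<and> z \<le> v \<and> f u z \<noteq> 0}"
    show "z \<in> insert u (snd ` ?S)"
    proof (cases "z = u")
      case False
      hence "(u, z) \<in> ?S" using z by auto
      thus ?thesis by force
    qed simp
  qed
  ultimately show ?thesis by (meson finite_imageI finite_insert finite_subset)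
next
  case False
  hence "{z. u \<le> z \<and> z \<le> v \<and> f u z \<noteq> 0} \<subseteq> {u}"
    by (auto simp: order.order_iff_strict dest: order.strict_trans1)
  thus ?thesis by (rule finite_subset) simp
qed

lemma FI_col_finite:
  assumes "f \<in> FI" shows "finite {z. u \<le> z \<and> z \<le> v \<and> f z v \<noteq> 0}"
proof (cases "u < v")
  case True
  let ?S = "{(p, q). u \<le> p \<and> p < q \<and> q \<le> v \<and> f p q \<noteq> 0}"
  have "finite ?S" using assms True unfolding FI_def by blast
  moreover have "{z. u \<le> z \<and> z \<le> v \<and> f z v \<noteq> 0} \<subseteq> insert v (fst ` ?S)"
  proof
    fix z assume z: "z \<in> {z. u \<le> z \<and> z \<le> v \<and> f z v \<noteq> 0}"
    show "z \<in> insert v (fst ` ?S)"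
    proof (cases "z = v")
      case False
      hence "(z, v) \<in> ?S" using z by auto
      thus ?thesis by force
    qed simp
  qed
  ultimately show ?thesis by (meson finite_imageI finite_insert finite_subset)
next
  case False
  hence "{z. u \<le> z \<and> z \<le> v \<and> f z v \<noteq> 0} \<subseteq> {v}"
    by (auto simp: order.order_iff_strict dest: order.strict_trans2)
  thus ?thesis by (rule finite_subset) simp
qed

lemma FI_mult_closed:
  assumes f: "f \<in> FI" and g: "g \<in> FI" shows "fi_mult f g \<in> FI"
proof -
  have "finite {(p, q). x \<le> p \<and> p < q \<and> q \<le> y \<and> fi_mult f g p q \<noteq> 0}" if "x < y" for x y
  proof -
    let ?Sf = "{(p, q). x \<le> p \<and> p < q \<and> q \<le> y \<and> f p q \<noteq> 0}"
    let ?Sg = "{(p, q). x \<le> p \<and> p < q \<and> q \<le> y \<and> g p q \<noteq> 0}"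
    have fin: "finite ?Sf" "finite ?Sg" using f g that unfolding FI_def by blast+
    have "{(p, q). x \<le> p \<and> p < q \<and> q \<le> y \<and> fi_mult f g p q \<noteq> 0}
      \<subseteq> ?Sf \<union> ?Sg \<union> (\<lambda>((a,b),(c,d)). (a,d)) ` (?Sf \<times> ?Sg)"
    proof
      fix r assume r: "r \<in> {(p, q). x \<le> p \<and> p < q \<and> q \<le> y \<and> fi_mult f g p q \<noteq> 0}"
      obtain p q where r_eq: "r = (p, q)" by (cases r)
      with r have pq: "x \<le> p" "p < q" "q \<le> y" "fi_mult f g p q \<noteq> 0" by auto
      show "r \<in> ?Sf \<union> ?Sg \<union> (\<lambda>((a,b),(c,d)). (a,d)) ` (?Sf \<times> ?Sg)"
      proof (cases "(p, q) \<in> ?Sf \<union> ?Sg")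
        case True thus ?thesis using r_eq by blast
      next
        case False
        hence nf: "(p, q) \<notin> ?Sf" and ng: "(p, q) \<notin> ?Sg" by auto
        obtain z where z: "p \<le> z" "z \<le> q" "f p z \<noteq> 0" "g z q \<noteq> 0"
          using mult_nonzero[OF pq(4)] by blast
        have "z \<noteq> p" using ng pq z by auto
        moreover have "z \<noteq> q" using nf pq z by auto
        ultimately have "(p, z) \<in> ?Sf" "(z, q) \<in> ?Sg" using pq z
          by (auto simp: order.order_iff_strict intro: order.trans)
        hence "(p, q) \<in> (\<lambda>((a,b),(c,d)). (a,d)) ` (?Sf \<times> ?Sg)"
          by (intro image_eqI[of _ _ "((p,z),(z,q))"]) auto
        thus ?thesis using r_eq by blast
      qed
    qed
    thus ?thesis using fin by (meson finite_SigmaI finite_Un finite_imageI finite_subset)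
  qed
  moreover have "\<forall>x y. \<not> x \<le> y \<longrightarrow> fi_mult f g x y = 0" unfolding fi_mult_def by auto
  ultimately show ?thesis unfolding FI_def by blast
qed

lemma FI_assoc:
  assumes f: "f \<in> FI" and g: "g \<in> FI" and h: "h \<in> FI"
  shows "fi_mult (fi_mult f g) h = fi_mult f (fi_mult g h)"
proof (intro ext)
  fix u v
  show "fi_mult (fi_mult f g) h u v = fi_mult f (fi_mult g h) u v"
  proof (cases "u \<le> v")
    case False thus ?thesis unfolding fi_mult_def by simp
  next
    case True
    have tf: "tri f" and tg: "tri g" and th: "tri h" using f g h by (auto intro: FI_tri)
    define A where "A = {z. u \<le> z \<and> z \<le> v \<and> f u z \<noteq> 0}"
    define B where "B = {z. u \<le> z \<and> z \<le> v \<and> h z v \<noteq> 0}"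
    have fA: "finite A" unfolding A_def by (rule FI_row_finite[OF f])
    have fB: "finite B" unfolding B_def by (rule FI_col_finite[OF h])
    have "fi_mult (fi_mult f g) h u v = (\<Sum>w\<in>B. fi_mult f g u w * h w v)"
      by (rule sumrow[OF mult_tri th fB]) (auto simp: B_def)
    also have "\<dots> = (\<Sum>w\<in>B. (\<Sum>z\<in>A. f u z * g z w) * h w v)"
    proof (rule sum.cong[OF refl])
      fix w assume "w \<in> B"
      hence "w \<le> v" unfolding B_def by simp
      have "fi_mult f g u w = (\<Sum>z\<in>A. f u z * g z w)"
        by (rule sumrow[OF tf tg fA]) (use \<open>w \<le> v\<close> in \<open>auto simp: A_def intro: order.trans\<close>)
      thus "fi_mult f g u w * h w v = (\<Sum>z\<in>A. f u z * g z w) * h w v" by simp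
    qed
    also have "\<dots> = (\<Sum>w\<in>B. \<Sum>z\<in>A. f u z * g z w * h w v)"
      by (simp add: sum_distrib_right)
    also have "\<dots> = (\<Sum>z\<in>A. \<Sum>w\<in>B. f u z * g z w * h w v)"
      by (rule sum.swap)
    also have "\<dots> = (\<Sum>z\<in>A. f u z * (\<Sum>w\<in>B. g z w * h w v))"
      by (simp add: sum_distrib_left mult.assoc)
    also have "\<dots> = (\<Sum>z\<in>A. f u z * fi_mult g h z v)"
    proof (rule sum.cong[OF refl])
      fix z assume "z \<in> A"
      hence "u \<le> z" unfolding A_def by simp
      have "fi_mult g h z v = (\<Sum>w\<in>B. g z w * h w v)"
        by (rule sumrow[OF tg th fB]) (use \<open>u \<le> z\<close> in \<open>auto simp: B_def intro: order.trans\<close>)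
      thus "f u z * (\<Sum>w\<in>B. g z w * h w v) = f u z * fi_mult g h z v" by simp
    qed
    also have "\<dots> = fi_mult f (fi_mult g h) u v"
      by (rule sumrow[OF tf mult_tri fA, symmetric]) (auto simp: A_def)
    finally show ?thesis .
  qed
qed

lemma fi_one_FI: "(fi_one :: 'a::order \<Rightarrow> 'a \<Rightarrow> 'k::field) \<in> FI"
  unfolding FI_def fi_one_def by auto

lemma tri_one: "tri fi_one"
  unfolding tri_def fi_one_def by auto

lemma one_mult: assumes "tri f" shows "fi_mult fi_one f = f"
proof (intro ext)
  fix u v
  have "fi_mult fi_one f u v = (\<Sum>z\<in>{u}. fi_one u z * f z v)"
    by (rule sumrow[OF tri_one assms]) (auto simp: fi_one_def split: if_splits)
  thus "fi_mult fi_one f u v = f u v" by (simp add: fi_one_def)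
qed

lemma mult_one: assumes "tri f" shows "fi_mult f fi_one = f"
proof (intro ext)
  fix u v
  have "fi_mult f fi_one u v = (\<Sum>z\<in>{v}. f u z * fi_one z v)"
    by (rule sumrow[OF assms tri_one]) (auto simp: fi_one_def split: if_splits)
  thus "fi_mult f fi_one u v = f u v" by (simp add: fi_one_def)
qed

lemma FI_monoid: "monoid (FI_monoid :: ('a::order \<Rightarrow> 'a \<Rightarrow> 'k::field) monoid)"
  by unfold_locales
     (auto simp: FI_monoid_def FI_mult_closed FI_assoc fi_one_FI one_mult mult_one FI_tri)

lemma FI_units_group: "group (FI_units :: ('a::order \<Rightarrow> 'a \<Rightarrow> 'k::field) monoid)"
  unfolding FI_units_def by (rule monoid.units_group[OF FI_monoid])



definition Ik :: "nat \<Rightarrow> ('a::order \<Rightarrow> 'a \<Rightarrow> 'k::field) set" where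
  "Ik k = {f. \<forall>a b. f a b \<noteq> 0 \<longrightarrow> P k a b}"

definition ee :: "'a::order \<Rightarrow> 'a \<Rightarrow> 'a \<Rightarrow> 'a \<Rightarrow> 'k::field" where
  "ee a b = (\<lambda>u v. if u = a \<and> v = b then 1 else 0)"

lemma fspan_sub: assumes "S \<subseteq> Ik k" shows "fspan S \<subseteq> Ik k"
proof
  fix x assume "x \<in> fspan S"
  thus "x \<in> Ik k"
  proof (induction rule: fspan.induct)
    case (add a b)
    show ?case unfolding Ik_def
    proof (intro CollectI allI impI)
      fix u v assume "a u v + b u v \<noteq> 0"
      hence "a u v \<noteq> 0 \<or> b u v \<noteq> 0" by auto
      thus "P k u v" using add.IH unfolding Ik_def by blast
    qed
  qed (use assms in \<open>auto simp: Ik_def fi_zero_def\<close>)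
qed

lemma fspan_mono: assumes "S \<subseteq> T" shows "fspan S \<subseteq> fspan T"
proof
  fix x assume "x \<in> fspan S"
  thus "x \<in> fspan T"
    by (induction rule: fspan.induct) (use assms in \<open>auto intro: fspan.intros\<close>)
qed

lemma Ik0_tri: "f \<in> Ik 0 \<longleftrightarrow> tri f"
  by (auto simp: Ik_def tri_def)

lemma FI_Ik0: "f \<in> FI \<Longrightarrow> f \<in> Ik 0"
  using FI_tri Ik0_tri by blast

lemma mult_Ik: assumes "f \<in> Ik k" "g \<in> Ik j" shows "fi_mult f g \<in> Ik (k+j)"
  unfolding Ik_def
proof (intro CollectI allI impI)
  fix a b assume "fi_mult f g a b \<noteq> 0"
  then obtain z where "f a z \<noteq> 0" "g z b \<noteq> 0" using mult_nonzero by blast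
  thus "P (k + j) a b" using assms unfolding Ik_def by (blast intro: P_trans)
qed

lemma comm_Ik: assumes "f \<in> Ik k" "g \<in> Ik j" shows "fi_comm f g \<in> Ik (k+j)"
proof -
  have 1: "fi_mult f g \<in> Ik (k+j)" by (rule mult_Ik[OF assms])
  have 2: "fi_mult g f \<in> Ik (k+j)" using mult_Ik[OF assms(2,1)] by (simp add: add.commute)
  show ?thesis unfolding Ik_def
  proof (intro CollectI allI impI)
    fix a b assume "fi_comm f g a b \<noteq> 0"
    hence "fi_mult f g a b \<noteq> 0 \<or> fi_mult g f a b \<noteq> 0" unfolding fi_comm_def by auto
    thus "P (k + j) a b" using 1 2 unfolding Ik_def by blast
  qed
qed

lemma comm_Ik01: assumes "f \<in> Ik 0" "g \<in> Ik 0" shows "fi_comm f g \<in> Ik 1"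
  unfolding Ik_def
proof (intro CollectI allI impI)
  fix a b assume ne: "fi_comm f g a b \<noteq> 0"
  have tf: "tri f" and tg: "tri g" using assms Ik0_tri by blast+
  have "a \<noteq> b"
  proof
    assume "a = b"
    hence "fi_comm f g a b = 0" unfolding fi_comm_def by (simp add: mult_diag[OF tf tg] mult_diag[OF tg tf])
    thus False using ne by simp
  qed
  moreover have "a \<le> b" using ne unfolding fi_comm_def fi_mult_def by (auto split: if_splits)
  ultimately have "a < b" by simp
  thus "P 1 a b" unfolding One_nat_def P.simps by blast
qed

lemma lie_br_Ik: "U \<subseteq> Ik k \<Longrightarrow> V \<subseteq> Ik j \<Longrightarrow> lie_br U V \<subseteq> Ik (k+j)"
  unfolding lie_br_def by (rule fspan_sub) (auto intro: comm_Ik)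

lemma lie_br_Ik01: assumes "U \<subseteq> Ik 0" "V \<subseteq> Ik 0" shows "lie_br U V \<subseteq> Ik 1"
  unfolding lie_br_def by (rule fspan_sub) (use assms in \<open>blast intro: comm_Ik01\<close>)

lemma prod_sp_Ik: "U \<subseteq> Ik k \<Longrightarrow> V \<subseteq> Ik j \<Longrightarrow> prod_sp U V \<subseteq> Ik (k+j)"
  unfolding prod_sp_def by (rule fspan_sub) (auto intro: mult_Ik)

lemma FI_sub_Ik0: "FI \<subseteq> Ik 0"
  using FI_Ik0 by blast

lemma lie_der_Ik: "(lie_der (Suc n) :: ('a::order \<Rightarrow> 'a \<Rightarrow> 'k::field) set) \<subseteq> Ik (2^n)"
proof (induction n)
  case 0
  show ?case using lie_br_Ik01[OF FI_sub_Ik0 FI_sub_Ik0] by simp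
next
  case (Suc n)
  have "(lie_der (Suc (Suc n)) :: ('a \<Rightarrow> 'a \<Rightarrow> 'k) set) = lie_br (lie_der (Suc n)) (lie_der (Suc n))" by simp
  also have "\<dots> \<subseteq> Ik (2^n + 2^n)" by (rule lie_br_Ik[OF Suc.IH Suc.IH])
  finally show ?case by (simp only: power_Suc mult_2)
qed

lemma strong_Ik: "(strong_lie_der (Suc n) :: ('a::order \<Rightarrow> 'a \<Rightarrow> 'k::field) set) \<subseteq> Ik (2^n)"
proof (induction n)
  case 0
  show ?case using prod_sp_Ik[OF lie_br_Ik01[OF FI_sub_Ik0 FI_sub_Ik0] FI_sub_Ik0] by simp
next
  case (Suc n)
  have "(strong_lie_der (Suc (Suc n)) :: ('a \<Rightarrow> 'a \<Rightarrow> 'k) set) = prod_sp (lie_br (strong_lie_der (Suc n)) (strong_lie_der (Suc n))) FI" by simp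
  also have "\<dots> \<subseteq> Ik (2^n + 2^n + 0)" by (rule prod_sp_Ik[OF lie_br_Ik[OF Suc.IH Suc.IH] FI_sub_Ik0])
  finally show ?case by (simp only: power_Suc mult_2 add_0_right)
qed

lemma Ik_zero: fixes f :: "'a::order \<Rightarrow> 'a \<Rightarrow> 'k::field"
  assumes "\<And>a b::'a. \<not> P k a b" "f \<in> Ik k" shows "f = fi_zero"
proof (intro ext)
  fix a b
  have "f a b \<noteq> 0 \<longrightarrow> P k a b" using assms(2) unfolding Ik_def by blast
  thus "f a b = fi_zero a b" using assms(1)[of a b] unfolding fi_zero_def by blast
qed

lemma lie_br_mono: "U \<subseteq> U' \<Longrightarrow> V \<subseteq> V' \<Longrightarrow> lie_br U V \<subseteq> lie_br U' V'"
  unfolding lie_br_def by (rule fspan_mono) blast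

lemma lie_br_sub_prod: "lie_br U V \<subseteq> prod_sp (lie_br U V) FI"
proof
  fix x assume x: "x \<in> lie_br U V"
  have "lie_br U V \<subseteq> Ik 0"
    unfolding lie_br_def by (rule fspan_sub) (auto simp: Ik0_tri fi_comm_def tri_def fi_mult_def)
  hence "tri x" using x Ik0_tri by blast
  hence "x = fi_mult x fi_one" by (simp add: mult_one)
  hence "x \<in> {fi_mult u v | u v. u \<in> lie_br U V \<and> v \<in> FI}" using x fi_one_FI by blast
  thus "x \<in> prod_sp (lie_br U V) FI" unfolding prod_sp_def by (rule fspan.base)
qed

lemma lie_sub_strong: "(lie_der n :: ('a::order \<Rightarrow> 'a \<Rightarrow> 'k::field) set) \<subseteq> strong_lie_der n"
proof (induction n)
  case (Suc n)
  have "(lie_der (Suc n) :: ('a \<Rightarrow> 'a \<Rightarrow> 'k) set) \<subseteq> lie_br (strong_lie_der n) (strong_lie_der n)"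
    using lie_br_mono[OF Suc.IH Suc.IH] by simp
  also have "\<dots> \<subseteq> strong_lie_der (Suc n)" using lie_br_sub_prod by simp
  finally show ?case .
qed simp

lemma ee_FI: "(ee a b :: 'a::order \<Rightarrow> 'a \<Rightarrow> 'k::field) \<in> FI" if "a \<le> b"
proof -
  have "finite {(p, q). x \<le> p \<and> p < q \<and> q \<le> y \<and> (ee a b :: 'a \<Rightarrow> 'a \<Rightarrow> 'k) p q \<noteq> 0}" for x y
    by (rule finite_subset[of _ "{(a,b)}"]) (auto simp: ee_def)
  thus ?thesis using that unfolding FI_def ee_def by auto
qed

lemma ee_mult: assumes "a \<le> b" "tri g"
  shows "fi_mult (ee a b) g = (\<lambda>u v. if u = a then g b v else 0)"
proof (intro ext)
  fix u v
  have "tri (ee a b)" using assms(1) unfolding tri_def ee_def by auto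
  hence "fi_mult (ee a b) g u v = (\<Sum>z\<in>{b}. ee a b u z * g z v)"
    by (rule sumrow[OF _ assms(2)]) (auto simp: ee_def split: if_splits)
  thus "fi_mult (ee a b) g u v = (if u = a then g b v else 0)" by (simp add: ee_def)
qed

lemma tri_ee: "a \<le> b \<Longrightarrow> tri (ee a b)"
  unfolding tri_def ee_def by auto

lemma comm_ee1: assumes "a < b" shows "fi_comm (ee a a) (ee a b) = (ee a b :: 'a::order \<Rightarrow> 'a \<Rightarrow> 'k::field)"
proof -
  have 1: "fi_mult (ee a a) (ee a b) = (\<lambda>u v. if u = a then (ee a b :: 'a \<Rightarrow> 'a \<Rightarrow> 'k) a v else 0)"
    using assms by (simp add: ee_mult tri_ee less_imp_le)
  have 2: "fi_mult (ee a b) (ee a a) = (\<lambda>u v. if u = a then (ee a a :: 'a \<Rightarrow> 'a \<Rightarrow> 'k) b v else 0)"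
    using assms by (simp add: ee_mult tri_ee less_imp_le)
  show ?thesis unfolding fi_comm_def 1 2 using assms by (intro ext) (auto simp: ee_def)
qed

lemma comm_ee2: assumes "a < c" "c < b" shows "fi_comm (ee a c) (ee c b) = (ee a b :: 'a::order \<Rightarrow> 'a \<Rightarrow> 'k::field)"
proof -
  have "a \<noteq> b" "a \<le> b" using assms by (auto dest: order.strict_trans)
  have 1: "fi_mult (ee a c) (ee c b) = (\<lambda>u v. if u = a then (ee c b :: 'a \<Rightarrow> 'a \<Rightarrow> 'k) c v else 0)"
    using assms by (simp add: ee_mult tri_ee less_imp_le)
  have 2: "fi_mult (ee c b) (ee a c) = (\<lambda>u v. if u = c then (ee a c :: 'a \<Rightarrow> 'a \<Rightarrow> 'k) b v else 0)"
    using assms by (simp add: ee_mult tri_ee less_imp_le)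
  show ?thesis unfolding fi_comm_def 1 2 using assms \<open>a \<noteq> b\<close> by (intro ext) (auto simp: ee_def)
qed

lemma P_Suc_less: "P (Suc n) x y \<Longrightarrow> x < y"
  by (auto dest: P_le intro: order.strict_trans2)

lemma ee_lie: "P (2^k) a b \<Longrightarrow> (ee a b :: 'a::order \<Rightarrow> 'a \<Rightarrow> 'k::field) \<in> lie_der (Suc k)"
proof (induction k arbitrary: a b)
  case (0 a b)
  hence ab: "a < b" by (auto intro: order.strict_trans2)
  have "(ee a b :: 'a \<Rightarrow> 'a \<Rightarrow> 'k) = fi_comm (ee a a) (ee a b)" by (rule comm_ee1[OF ab, symmetric])
  moreover have "(ee a a :: 'a \<Rightarrow> 'a \<Rightarrow> 'k) \<in> FI" "(ee a b :: 'a \<Rightarrow> 'a \<Rightarrow> 'k) \<in> FI"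
    using ab by (auto intro: ee_FI)
  ultimately have "ee a b \<in> {fi_comm u v | u v. u \<in> (FI :: ('a \<Rightarrow> 'a \<Rightarrow> 'k) set) \<and> v \<in> FI}" by blast
  thus ?case by (simp add: lie_br_def fspan.base)
next
  case (Suc k a b)
  have "P (2^k + 2^k) a b" using Suc.prems by (simp only: power_Suc mult_2)
  then obtain c where c: "P (2^k) a c" "P (2^k) c b" using P_split by blast
  have k1: "(2::nat)^k = Suc (2^k - 1)" by simp
  have ac: "a < c" using c(1) k1 P_Suc_less by metis
  have cb: "c < b" using c(2) k1 P_Suc_less by metis
  have "(ee a b :: 'a \<Rightarrow> 'a \<Rightarrow> 'k) = fi_comm (ee a c) (ee c b)" by (rule comm_ee2[OF ac cb, symmetric])
  moreover have "(ee a c :: 'a \<Rightarrow> 'a \<Rightarrow> 'k) \<in> lie_der (Suc k)" "(ee c b :: 'a \<Rightarrow> 'a \<Rightarrow> 'k) \<in> lie_der (Suc k)"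
    using Suc.IH c by auto
  ultimately have "ee a b \<in> {fi_comm u v | u v. u \<in> (lie_der (Suc k) :: ('a \<Rightarrow> 'a \<Rightarrow> 'k) set) \<and> v \<in> lie_der (Suc k)}" by blast
  thus ?case by (simp add: lie_br_def fspan.base)
qed

lemma ee_ne: "(ee a b :: 'a::order \<Rightarrow> 'a \<Rightarrow> 'k::field) \<noteq> fi_zero"
proof
  assume "(ee a b :: 'a::order \<Rightarrow> 'a \<Rightarrow> 'k::field) = fi_zero"
  hence "(ee a b :: 'a::order \<Rightarrow> 'a \<Rightarrow> 'k::field) a b = fi_zero a b" by simp
  thus False by (simp add: ee_def fi_zero_def)
qed

lemma one_ne_zero_fi: "(fi_one :: 'a::order \<Rightarrow> 'a \<Rightarrow> 'k::field) \<noteq> fi_zero"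
proof
  assume eq: "(fi_one :: 'a::order \<Rightarrow> 'a \<Rightarrow> 'k::field) = fi_zero"
  have "(fi_one :: 'a \<Rightarrow> 'a \<Rightarrow> 'k) undefined undefined = 1" by (simp add: fi_one_def)
  moreover have "\<forall>x y. (fi_one :: 'a \<Rightarrow> 'a \<Rightarrow> 'k) x y = fi_zero x y" using eq by simp
  hence "(fi_one :: 'a \<Rightarrow> 'a \<Rightarrow> 'k) undefined undefined = 0" by (simp add: fi_zero_def)
  ultimately show False by simp
qed

lemma log_ceil: "\<exists>c::nat. \<lceil>log 2 (real m + 1)\<rceil> = int c \<and> m < 2^c \<and> (c \<ge> 1 \<longrightarrow> 2^(c-1) \<le> m)"
proof -
  define c where "c = (LEAST c::nat. m < 2^c)"
  have "m < 2^m" by (rule less_exp)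
  hence c1: "m < 2^c" unfolding c_def by (rule LeastI)
  have c2: "c \<ge> 1 \<longrightarrow> 2^(c-1) \<le> m"
  proof
    assume "c \<ge> 1"
    hence "c - 1 < c" by simp
    hence "\<not> m < 2^(c-1)" unfolding c_def using not_less_Least by blast
    thus "2^(c-1) \<le> m" by simp
  qed
  have up: "log 2 (real m + 1) \<le> real c"
  proof -
    have "m + 1 \<le> 2^c" using c1 by simp
    hence "real (m + 1) \<le> real (2^c)" by (simp only: of_nat_le_iff)
    hence "real m + 1 \<le> 2^c" by simp
    hence "log 2 (real m + 1) \<le> log 2 (2^c)" by (subst log_le_cancel_iff) auto
    thus ?thesis by simp
  qed
  have low: "real c - 1 < log 2 (real m + 1)"
  proof (cases "c \<ge> 1")
    case True
    hence "2^(c-1) < m + 1" using c2 by simp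
    hence "real (2^(c-1)) < real (m + 1)" by (simp only: of_nat_less_iff)
    hence "2^(c-1) < real m + 1" by simp
    hence "log 2 (2^(c-1)) < log 2 (real m + 1)" by (subst log_less_cancel_iff) auto
    hence "real (c - 1) < log 2 (real m + 1)" by simp
    thus ?thesis using True by (simp add: of_nat_diff)
  next
    case False
    hence "c = 0" by simp
    have "0 \<le> log 2 (real m + 1)" by (subst zero_le_log_cancel_iff) auto
    thus ?thesis using \<open>c = 0\<close> by linarith
  qed
  have "\<lceil>log 2 (real m + 1)\<rceil> = int c"
    by (rule ceiling_unique) (use up low in auto)
  thus ?thesis using c1 c2 by blast
qed



lemma part1:
  assumes "FI_lie_solvable TYPE('a::order \<Rightarrow> 'a \<Rightarrow> 'k::field)"
  shows "\<exists>m::nat. poset_length TYPE('a) = enat m \<and>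
               int (dl_Lie TYPE('a \<Rightarrow> 'a \<Rightarrow> 'k)) = \<lceil>log 2 (real m + 1)\<rceil> + 1 \<and>
               int (dl_strong_Lie TYPE('a \<Rightarrow> 'a \<Rightarrow> 'k)) = \<lceil>log 2 (real m + 1)\<rceil> + 1"
proof -
  obtain n where n: "(lie_der n :: ('a \<Rightarrow> 'a \<Rightarrow> 'k) set) = {fi_zero}"
    using assms unfolding FI_lie_solvable_def by blast
  have FI_ne: "\<exists>f \<in> (FI :: ('a \<Rightarrow> 'a \<Rightarrow> 'k) set). f \<noteq> fi_zero"
    using fi_one_FI one_ne_zero_fi by blast
  have n0: "n \<noteq> 0"
  proof
    assume "n = 0"
    hence "(FI :: ('a \<Rightarrow> 'a \<Rightarrow> 'k) set) = {fi_zero}" using n by simp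
    thus False using FI_ne by blast
  qed
  have bound: "k \<le> 2^n" if "P k (x::'a) y" for k x y
  proof (rule ccontr)
    assume "\<not> k \<le> 2^n"
    moreover have "(2::nat)^(n-1) \<le> 2^n" by (rule power_increasing) auto
    ultimately have "2^(n-1) \<le> k" by linarith
    hence "P (2^(n-1)) x y" using that P_le_k' by blast
    hence "(ee x y :: 'a \<Rightarrow> 'a \<Rightarrow> 'k) \<in> lie_der (Suc (n-1))" by (rule ee_lie)
    hence "(ee x y :: 'a \<Rightarrow> 'a \<Rightarrow> 'k) \<in> lie_der n" using n0 by simp
    thus False using n ee_ne by blast
  qed
  obtain m where m: "poset_length TYPE('a) = enat m" using PL_bounded bound by blast
  obtain c where c: "\<lceil>log 2 (real m + 1)\<rceil> = int c" "m < 2^c" "c \<ge> 1 \<longrightarrow> 2^(c-1) \<le> m"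
    using log_ceil by blast
  obtain x0 y0 :: 'a where xy: "P m x0 y0" using PL_attained[OF m] by blast
  have noP: "\<not> P (2^c) a b" for a b :: 'a
  proof
    assume "P (2^c) a b"
    hence "enat (2^c) \<le> enat m" using P_PL m by metis
    thus False using c(2) by simp
  qed
  have top: "(lie_der (Suc c) :: ('a \<Rightarrow> 'a \<Rightarrow> 'k) set) = {fi_zero}"
  proof
    show "(lie_der (Suc c) :: ('a \<Rightarrow> 'a \<Rightarrow> 'k) set) \<subseteq> {fi_zero}"
      using lie_der_Ik[of c] Ik_zero[OF noP] by blast
    show "{fi_zero} \<subseteq> (lie_der (Suc c) :: ('a \<Rightarrow> 'a \<Rightarrow> 'k) set)"
      by (simp add: lie_br_def fspan.zero)
  qed
  have topS: "(strong_lie_der (Suc c) :: ('a \<Rightarrow> 'a \<Rightarrow> 'k) set) = {fi_zero}"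
  proof
    show "(strong_lie_der (Suc c) :: ('a \<Rightarrow> 'a \<Rightarrow> 'k) set) \<subseteq> {fi_zero}"
      using strong_Ik[of c] Ik_zero[OF noP] by blast
    show "{fi_zero} \<subseteq> (strong_lie_der (Suc c) :: ('a \<Rightarrow> 'a \<Rightarrow> 'k) set)"
      by (simp add: prod_sp_def fspan.zero)
  qed
  have low: "\<exists>f \<in> (lie_der j :: ('a \<Rightarrow> 'a \<Rightarrow> 'k) set). f \<noteq> fi_zero" if "j \<le> c" for j
  proof (cases j)
    case 0 thus ?thesis using FI_ne by simp
  next
    case (Suc i)
    hence "c \<ge> 1" using that by simp
    hence "2^(c-1) \<le> m" using c(3) by simp
    moreover have "(2::nat)^i \<le> 2^(c-1)" by (rule power_increasing) (use Suc that in auto)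
    ultimately have "2^i \<le> m" by linarith
    hence "P (2^i) x0 y0" using xy P_le_k' by blast
    hence "(ee x0 y0 :: 'a \<Rightarrow> 'a \<Rightarrow> 'k) \<in> lie_der (Suc i)" by (rule ee_lie)
    thus ?thesis using Suc ee_ne by blast
  qed
  have dl1: "dl_Lie TYPE('a \<Rightarrow> 'a \<Rightarrow> 'k) = Suc c"
    unfolding dl_Lie_def
  proof (rule Least_equality)
    show "(lie_der (Suc c) :: ('a \<Rightarrow> 'a \<Rightarrow> 'k) set) = {fi_zero}" by (rule top)
    fix y assume y: "(lie_der y :: ('a \<Rightarrow> 'a \<Rightarrow> 'k) set) = {fi_zero}"
    show "Suc c \<le> y"
    proof (rule ccontr)
      assume "\<not> Suc c \<le> y"
      hence "y \<le> c" by simp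
      thus False using low[of y] y by blast
    qed
  qed
  have dl2: "dl_strong_Lie TYPE('a \<Rightarrow> 'a \<Rightarrow> 'k) = Suc c"
    unfolding dl_strong_Lie_def
  proof (rule Least_equality)
    show "(strong_lie_der (Suc c) :: ('a \<Rightarrow> 'a \<Rightarrow> 'k) set) = {fi_zero}" by (rule topS)
    fix y assume y: "(strong_lie_der y :: ('a \<Rightarrow> 'a \<Rightarrow> 'k) set) = {fi_zero}"
    show "Suc c \<le> y"
    proof (rule ccontr)
      assume "\<not> Suc c \<le> y"
      hence "y \<le> c" by simp
      then obtain f where "f \<in> (lie_der y :: ('a \<Rightarrow> 'a \<Rightarrow> 'k) set)" "f \<noteq> fi_zero" using low by blast
      thus False using lie_sub_strong[of y] y by blast
    qed
  qed
  show ?thesis using m c(1) dl1 dl2 by auto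
qed



lemma U_carrier: "carrier FI_units = Units FI_monoid"
  by (simp add: FI_units_def units_of_def)

lemma U_mult: "x \<otimes>\<^bsub>FI_units\<^esub> y = fi_mult x y"
  by (simp add: FI_units_def units_of_def FI_monoid_def)

lemma U_one: "\<one>\<^bsub>FI_units\<^esub> = fi_one"
  by (simp add: FI_units_def units_of_def FI_monoid_def)

lemma U_mem: "h \<in> carrier FI_units \<longleftrightarrow> h \<in> FI \<and> (\<exists>g\<in>FI. fi_mult g h = fi_one \<and> fi_mult h g = fi_one)"
  by (simp add: U_carrier Units_def FI_monoid_def)

lemma U_FI: "h \<in> carrier FI_units \<Longrightarrow> h \<in> FI"
  using U_mem by blast

definition V :: "nat \<Rightarrow> ('a::order \<Rightarrow> 'a \<Rightarrow> 'k::field) set" where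
  "V j = {h \<in> carrier FI_units. (\<forall>a. h a a = 1) \<and> (\<forall>a b. a \<noteq> b \<longrightarrow> h a b \<noteq> 0 \<longrightarrow> P j a b)}"

lemma keyL:
  fixes c w w' :: "'a::order \<Rightarrow> 'a \<Rightarrow> 'k::field"
  assumes cF: "c \<in> FI" and tw: "tri w" and wd: "\<And>a. w a a \<noteq> 0" and wd': "\<And>a. w' a a = w a a"
    and ww: "\<And>a b. a \<noteq> b \<Longrightarrow> w a b \<noteq> w' a b \<Longrightarrow> P j a b"
    and eq: "fi_mult c w = w'"
  shows "(\<forall>a. c a a = 1) \<and> (\<forall>a b. a \<noteq> b \<longrightarrow> c a b \<noteq> 0 \<longrightarrow> P j a b)"
proof -
  have tc: "tri c" using cF by (rule FI_tri)
  have diag: "c a a = 1" for a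
  proof -
    have "c a a * w a a = w a a" using mult_diag[OF tc tw, of a] eq wd' by simp
    thus ?thesis using wd[of a] by simp
  qed
  have off: "P j a b" if ab: "a \<noteq> b" "c a b \<noteq> 0" for a b
  proof (rule ccontr)
    assume nP: "\<not> P j a b"
    have "a \<le> b" using tc ab(2) unfolding tri_def by blast
    hence "a < b" using ab(1) by simp
    define B where "B = {z. a < z \<and> z \<le> b \<and> c a z \<noteq> 0 \<and> \<not> P j a z}"
    have "B \<subseteq> {z. a \<le> z \<and> z \<le> b \<and> c a z \<noteq> 0}" unfolding B_def by auto
    hence finB: "finite B" using FI_row_finite[OF cF] by (rule finite_subset)
    have "b \<in> B" unfolding B_def using \<open>a < b\<close> ab nP by auto
    hence "B \<noteq> {}" by blast
    then obtain z0 where z0: "z0 \<in> B" "\<And>z. z \<in> B \<Longrightarrow> z \<le> z0 \<Longrightarrow> z0 = z"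
      using finite_has_minimal[OF finB] by metis
    have z0B: "a < z0" "z0 \<le> b" "c a z0 \<noteq> 0" "\<not> P j a z0" using z0(1) unfolding B_def by auto
    have "fi_mult c w a z0 = (\<Sum>z\<in>{a, z0}. c a z * w z z0)"
    proof (rule sumrow[OF tc tw])
      fix z assume z: "a \<le> z" "z \<le> z0" "c a z * w z z0 \<noteq> 0"
      show "z \<in> {a, z0}"
      proof (rule ccontr)
        assume "z \<notin> {a, z0}"
        hence "a < z" "z \<noteq> z0" using z by auto
        show False
        proof (cases "P j a z")
          case True
          hence "P j a z0" using z(2) by (rule P_mono_right)
          thus False using z0B by simp
        next
          case False
          hence "z \<in> B" unfolding B_def using \<open>a < z\<close> z z0B by (auto intro: order.trans)
          thus False using z0(2) z(2) \<open>z \<noteq> z0\<close> by blast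
        qed
      qed
    qed simp
    also have "\<dots> = c a a * w a z0 + c a z0 * w z0 z0" using z0B by simp
    also have "\<dots> = w a z0 + c a z0 * w z0 z0" using diag by simp
    finally have "w' a z0 = w a z0 + c a z0 * w z0 z0" using eq by simp
    moreover have "w a z0 = w' a z0" using ww[of a z0] z0B by auto
    ultimately have "c a z0 * w z0 z0 = 0" by simp
    thus False using z0B(3) wd[of z0] by simp
  qed
  show ?thesis using diag off by blast
qed

lemma V_mult:
  assumes "group (FI_units :: ('a::order \<Rightarrow> 'a \<Rightarrow> 'k::field) monoid)"
    and h1: "h1 \<in> (V j :: ('a \<Rightarrow> 'a \<Rightarrow> 'k) set)" and h2: "h2 \<in> V j"
  shows "fi_mult h1 h2 \<in> V j"
proof -
  interpret G: group "FI_units :: ('a \<Rightarrow> 'a \<Rightarrow> 'k) monoid" by fact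
  have c: "h1 \<in> carrier FI_units" "h2 \<in> carrier FI_units" using h1 h2 unfolding V_def by auto
  hence "h1 \<otimes>\<^bsub>FI_units\<^esub> h2 \<in> carrier FI_units" by simp
  hence cm: "fi_mult h1 h2 \<in> carrier FI_units" by (simp add: U_mult)
  have t: "tri h1" "tri h2" using c U_FI FI_tri by blast+
  have d: "fi_mult h1 h2 a a = 1" for a using mult_diag[OF t] h1 h2 unfolding V_def by simp
  have o: "P j a b" if ab: "a \<noteq> b" "fi_mult h1 h2 a b \<noteq> 0" for a b
  proof -
    obtain z where z: "a \<le> z" "z \<le> b" "h1 a z \<noteq> 0" "h2 z b \<noteq> 0" using mult_nonzero[OF ab(2)] by blast
    show ?thesis
    proof (cases "z = a")
      case True thus ?thesis using z ab h2 unfolding V_def by auto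
    next
      case False
      hence "P j a z" using z h1 unfolding V_def by auto
      thus ?thesis using z(2) by (rule P_mono_right)
    qed
  qed
  show ?thesis unfolding V_def using cm d o by blast
qed

lemma V_one: "(fi_one :: 'a::order \<Rightarrow> 'a \<Rightarrow> 'k::field) \<in> V j"
proof -
  have "fi_one \<in> carrier (FI_units :: ('a \<Rightarrow> 'a \<Rightarrow> 'k) monoid)"
    unfolding U_mem using fi_one_FI one_mult[OF tri_one] by blast
  thus ?thesis unfolding V_def by (auto simp: fi_one_def)
qed

lemma V_inv:
  assumes "group (FI_units :: ('a::order \<Rightarrow> 'a \<Rightarrow> 'k::field) monoid)"
    and h: "h \<in> (V j :: ('a \<Rightarrow> 'a \<Rightarrow> 'k) set)"
  shows "inv\<^bsub>FI_units\<^esub> h \<in> V j"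
proof -
  interpret G: group "FI_units :: ('a \<Rightarrow> 'a \<Rightarrow> 'k) monoid" by fact
  have hc: "h \<in> carrier FI_units" using h unfolding V_def by auto
  have ic: "inv\<^bsub>FI_units\<^esub> h \<in> carrier FI_units" using hc by simp
  have "inv\<^bsub>FI_units\<^esub> h \<otimes>\<^bsub>FI_units\<^esub> h = \<one>\<^bsub>FI_units\<^esub>" using hc by simp
  hence eq: "fi_mult (inv\<^bsub>FI_units\<^esub> h) h = fi_one" by (simp add: U_mult U_one)
  have hd: "h a a = 1" for a using h unfolding V_def by auto
  have ho: "a \<noteq> b \<Longrightarrow> h a b \<noteq> 0 \<Longrightarrow> P j a b" for a b using h unfolding V_def by auto
  have "(\<forall>a. (inv\<^bsub>FI_units\<^esub> h) a a = 1) \<and> (\<forall>a b. a \<noteq> b \<longrightarrow> (inv\<^bsub>FI_units\<^esub> h) a b \<noteq> 0 \<longrightarrow> P j a b)"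
  proof (rule keyL[OF U_FI[OF ic] FI_tri[OF U_FI[OF hc]] _ _ _ eq])
    show "\<And>a. h a a \<noteq> 0" using hd by simp
    show "\<And>a. fi_one a a = h a a" using hd by (simp add: fi_one_def)
    show "\<And>a b. a \<noteq> b \<Longrightarrow> h a b \<noteq> fi_one a b \<Longrightarrow> P j a b" using ho by (simp add: fi_one_def)
  qed
  thus ?thesis unfolding V_def using ic by blast
qed

lemma gen_V:
  assumes "group (FI_units :: ('a::order \<Rightarrow> 'a \<Rightarrow> 'k::field) monoid)"
    and S: "S \<subseteq> (V j :: ('a \<Rightarrow> 'a \<Rightarrow> 'k) set)"
  shows "generate FI_units S \<subseteq> V j"
proof
  fix x assume "x \<in> generate FI_units S"
  thus "x \<in> V j"
  proof (induction rule: generate.induct)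
    case one thus ?case by (simp add: U_one V_one)
  next
    case (incl h) thus ?case using S by blast
  next
    case (inv h) thus ?case using S V_inv[OF assms(1)] by blast
  next
    case (eng h1 h2) thus ?case using V_mult[OF assms(1)] by (simp add: U_mult)
  qed
qed

lemma (in group) comm_eq:
  assumes "x \<in> carrier G" "y \<in> carrier G"
  shows "(x \<otimes> y \<otimes> inv x \<otimes> inv y) \<otimes> (y \<otimes> x) = x \<otimes> y"
proof -
  have "(x \<otimes> y \<otimes> inv x \<otimes> inv y) \<otimes> (y \<otimes> x) = (x \<otimes> y \<otimes> inv x) \<otimes> (inv y \<otimes> (y \<otimes> x))"
    using assms by (simp add: m_assoc)
  also have "inv y \<otimes> (y \<otimes> x) = x" using assms by (simp add: m_assoc[symmetric])
  also have "(x \<otimes> y \<otimes> inv x) \<otimes> x = x \<otimes> y \<otimes> (inv x \<otimes> x)" using assms by (simp add: m_assoc)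
  also have "\<dots> = x \<otimes> y" using assms by simp
  finally show ?thesis .
qed

lemma (in group) comm_val:
  assumes "x \<in> carrier G" "y \<in> carrier G" "e \<in> carrier G" "x \<otimes> y = e \<otimes> (y \<otimes> x)"
  shows "x \<otimes> y \<otimes> inv x \<otimes> inv y = e"
proof -
  have "(x \<otimes> y \<otimes> inv x \<otimes> inv y) \<otimes> (y \<otimes> x) = e \<otimes> (y \<otimes> x)"
    using comm_eq[OF assms(1,2)] assms(4) by simp
  thus ?thesis using assms(1-3) right_cancel by (meson inv_closed m_closed)
qed

lemma comm_V:
  assumes grp: "group (FI_units :: ('a::order \<Rightarrow> 'a \<Rightarrow> 'k::field) monoid)"
    and h1: "h1 \<in> carrier (FI_units :: ('a \<Rightarrow> 'a \<Rightarrow> 'k) monoid)" and h2: "h2 \<in> carrier FI_units"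
    and ww: "\<And>a b. a \<noteq> b \<Longrightarrow> fi_mult h2 h1 a b \<noteq> fi_mult h1 h2 a b \<Longrightarrow> P j a b"
  shows "h1 \<otimes>\<^bsub>FI_units\<^esub> h2 \<otimes>\<^bsub>FI_units\<^esub> inv\<^bsub>FI_units\<^esub> h1 \<otimes>\<^bsub>FI_units\<^esub> inv\<^bsub>FI_units\<^esub> h2 \<in> V j"
proof -
  interpret G: group "FI_units :: ('a \<Rightarrow> 'a \<Rightarrow> 'k) monoid" by fact
  define c where "c = h1 \<otimes>\<^bsub>FI_units\<^esub> h2 \<otimes>\<^bsub>FI_units\<^esub> inv\<^bsub>FI_units\<^esub> h1 \<otimes>\<^bsub>FI_units\<^esub> inv\<^bsub>FI_units\<^esub> h2"
  have cc: "c \<in> carrier FI_units" unfolding c_def using h1 h2 by simp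
  have "c \<otimes>\<^bsub>FI_units\<^esub> (h2 \<otimes>\<^bsub>FI_units\<^esub> h1) = h1 \<otimes>\<^bsub>FI_units\<^esub> h2"
    unfolding c_def by (rule G.comm_eq[OF h1 h2])
  hence eq: "fi_mult c (fi_mult h2 h1) = fi_mult h1 h2" by (simp add: U_mult)
  have t: "tri h1" "tri h2" using h1 h2 U_FI FI_tri by blast+
  have wc: "h2 \<otimes>\<^bsub>FI_units\<^esub> h1 \<in> carrier FI_units" using h1 h2 by simp
  have wd: "fi_mult h2 h1 a a \<noteq> 0" for a
  proof
    assume z: "fi_mult h2 h1 a a = 0"
    obtain g where g: "g \<in> FI" "fi_mult g (fi_mult h2 h1) = fi_one"
      using wc unfolding U_mem U_mult by blast
    have "fi_mult g (fi_mult h2 h1) a a = g a a * fi_mult h2 h1 a a"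
      by (rule mult_diag[OF FI_tri[OF g(1)] mult_tri])
    thus False using z g(2) by (simp add: fi_one_def)
  qed
  have "(\<forall>a. c a a = 1) \<and> (\<forall>a b. a \<noteq> b \<longrightarrow> c a b \<noteq> 0 \<longrightarrow> P j a b)"
  proof (rule keyL[OF U_FI[OF cc] mult_tri wd _ ww eq])
    show "\<And>a. fi_mult h1 h2 a a = fi_mult h2 h1 a a"
      by (simp add: mult_diag[OF t] mult_diag[OF t(2) t(1)] mult.commute)
  qed
  thus ?thesis using cc unfolding V_def c_def by blast
qed

lemma derived_V1:
  assumes grp: "group (FI_units :: ('a::order \<Rightarrow> 'a \<Rightarrow> 'k::field) monoid)"
  shows "derived FI_units (carrier FI_units) \<subseteq> (V 1 :: ('a \<Rightarrow> 'a \<Rightarrow> 'k) set)"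
  unfolding derived_def
proof (rule gen_V[OF grp], clarify)
  fix h1 h2 assume h: "h1 \<in> carrier (FI_units :: ('a \<Rightarrow> 'a \<Rightarrow> 'k) monoid)" "h2 \<in> carrier (FI_units :: ('a \<Rightarrow> 'a \<Rightarrow> 'k) monoid)"
  show "h1 \<otimes>\<^bsub>FI_units\<^esub> h2 \<otimes>\<^bsub>FI_units\<^esub> inv\<^bsub>FI_units\<^esub> h1 \<otimes>\<^bsub>FI_units\<^esub> inv\<^bsub>FI_units\<^esub> h2 \<in> V 1"
  proof (rule comm_V[OF grp h])
    fix a b :: 'a assume ab: "a \<noteq> b" "fi_mult h2 h1 a b \<noteq> fi_mult h1 h2 a b"
    hence "fi_mult h2 h1 a b \<noteq> 0 \<or> fi_mult h1 h2 a b \<noteq> 0" by auto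
    hence "a \<le> b" using mult_tri unfolding tri_def by blast
    hence "a < b" using ab by simp
    thus "P 1 a b" unfolding One_nat_def P.simps by blast
  qed
qed

lemma derived_V2:
  assumes grp: "group (FI_units :: ('a::order \<Rightarrow> 'a \<Rightarrow> 'k::field) monoid)"
    and H: "H \<subseteq> (V k :: ('a \<Rightarrow> 'a \<Rightarrow> 'k) set)"
  shows "derived FI_units H \<subseteq> V (k + k)"
  unfolding derived_def
proof (rule gen_V[OF grp], clarify)
  fix h1 h2 assume h: "h1 \<in> H" "h2 \<in> H"
  hence hV: "h1 \<in> V k" "h2 \<in> V k" using H by auto
  hence hc: "h1 \<in> carrier FI_units" "h2 \<in> carrier FI_units" unfolding V_def by auto
  have t: "tri h1" "tri h2" using hc U_FI FI_tri by blast+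
  have d: "h1 a a = 1" "h2 a a = 1" for a using hV unfolding V_def by auto
  have o: "a \<noteq> b \<Longrightarrow> h1 a b \<noteq> 0 \<Longrightarrow> P k a b" "a \<noteq> b \<Longrightarrow> h2 a b \<noteq> 0 \<Longrightarrow> P k a b" for a b
    using hV unfolding V_def by auto
  have val: "fi_mult g1 g2 a b = g1 a b + g2 a b"
    if g: "tri g1" "tri g2" "\<And>a. g1 a a = 1" "\<And>a. g2 a a = 1"
      "\<And>a b. a \<noteq> b \<Longrightarrow> g1 a b \<noteq> 0 \<Longrightarrow> P k a b" "\<And>a b. a \<noteq> b \<Longrightarrow> g2 a b \<noteq> 0 \<Longrightarrow> P k a b"
      and ab: "a \<noteq> b" "\<not> P (k + k) a b" for g1 g2 :: "'a \<Rightarrow> 'a \<Rightarrow> 'k" and a b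
  proof -
    have "fi_mult g1 g2 a b = (\<Sum>z\<in>{a, b}. g1 a z * g2 z b)"
    proof (rule sumrow[OF g(1,2)])
      fix z assume z: "a \<le> z" "z \<le> b" "g1 a z * g2 z b \<noteq> 0"
      show "z \<in> {a, b}"
      proof (rule ccontr)
        assume "z \<notin> {a, b}"
        hence "P k a z" "P k z b" using z g(5,6) by auto
        hence "P (k + k) a b" by (rule P_trans)
        thus False using ab by simp
      qed
    qed simp
    thus ?thesis using ab g(3,4) by simp
  qed
  have "h1 \<otimes>\<^bsub>FI_units\<^esub> h2 \<otimes>\<^bsub>FI_units\<^esub> inv\<^bsub>FI_units\<^esub> h1 \<otimes>\<^bsub>FI_units\<^esub> inv\<^bsub>FI_units\<^esub> h2 \<in> V (k + k)"
  proof (rule comm_V[OF grp hc])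
    fix a b :: 'a assume ab: "a \<noteq> b" "fi_mult h2 h1 a b \<noteq> fi_mult h1 h2 a b"
    show "P (k + k) a b"
    proof (rule ccontr)
      assume nP: "\<not> P (k + k) a b"
      have "fi_mult h2 h1 a b = h2 a b + h1 a b"
        by (rule val[OF t(2) t(1) d(2) d(1) o(2) o(1) ab(1) nP])
      moreover have "fi_mult h1 h2 a b = h1 a b + h2 a b"
        by (rule val[OF t d o ab(1) nP])
      ultimately show False using ab(2) by simp
    qed
  qed
  thus "h1 \<otimes>\<^bsub>FI_units\<^esub> h2 \<otimes>\<^bsub>FI_units\<^esub> inv\<^bsub>FI_units\<^esub> h1 \<otimes>\<^bsub>FI_units\<^esub> inv\<^bsub>FI_units\<^esub> h2 \<in> V (k + k)" .
qed

lemma derived_V: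
  assumes grp: "group (FI_units :: ('a::order \<Rightarrow> 'a \<Rightarrow> 'k::field) monoid)"
  shows "(derived FI_units ^^ Suc n) (carrier FI_units) \<subseteq> (V (2^n) :: ('a \<Rightarrow> 'a \<Rightarrow> 'k) set)"
proof (induction n)
  case 0 thus ?case using derived_V1[OF grp] by simp
next
  case (Suc n)
  have "(derived FI_units ^^ Suc (Suc n)) (carrier FI_units) = derived FI_units ((derived FI_units ^^ Suc n) (carrier (FI_units :: ('a \<Rightarrow> 'a \<Rightarrow> 'k) monoid)))"
    by simp
  also have "\<dots> \<subseteq> V (2^n + 2^n)" by (rule derived_V2[OF grp Suc.IH])
  finally show ?case by (simp only: power_Suc mult_2)
qed

lemma V_top:
  assumes "\<And>a b::'a. \<not> P k a b"
  shows "(V k :: ('a::order \<Rightarrow> 'a \<Rightarrow> 'k::field) set) \<subseteq> {fi_one}"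
proof
  fix h :: "'a \<Rightarrow> 'a \<Rightarrow> 'k" assume "h \<in> V k"
  hence "h a b = fi_one a b" for a b using assms[of a b] unfolding V_def fi_one_def by auto
  thus "h \<in> {fi_one}" by auto
qed



definition DD :: "'a::order \<Rightarrow> 'k::field \<Rightarrow> 'a \<Rightarrow> 'a \<Rightarrow> 'k" where
  "DD a t = (\<lambda>u v. if u = v then (if u = a then t else 1) else 0)"

definition EE :: "'a::order \<Rightarrow> 'a \<Rightarrow> 'k::field \<Rightarrow> 'a \<Rightarrow> 'a \<Rightarrow> 'k" where
  "EE a b s = (\<lambda>u v. if u = v then 1 else if u = a \<and> v = b then s else 0)"

lemma DD_FI: "DD a t \<in> FI"
proof -
  have "finite {(p, q). x \<le> p \<and> p < q \<and> q \<le> y \<and> DD a t p q \<noteq> 0}" for x y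
    by (rule finite_subset[of _ "{}"]) (auto simp: DD_def)
  thus ?thesis unfolding FI_def DD_def by auto
qed

lemma EE_FI: "a \<le> b \<Longrightarrow> EE a b s \<in> FI"
proof -
  assume ab: "a \<le> b"
  have "finite {(p, q). x \<le> p \<and> p < q \<and> q \<le> y \<and> EE a b s p q \<noteq> 0}" for x y
    by (rule finite_subset[of _ "{(a,b)}"]) (auto simp: EE_def)
  thus ?thesis using ab unfolding FI_def EE_def by auto
qed

lemma tri_DD: "tri (DD a t)" using DD_FI FI_tri by blast
lemma tri_EE: "a \<le> b \<Longrightarrow> tri (EE a b s)" using EE_FI FI_tri by blast

lemma DD_mult: assumes "tri g"
  shows "fi_mult (DD a t) g = (\<lambda>u v. (if u = a then t else 1) * g u v)"
proof (intro ext)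
  fix u v
  have "fi_mult (DD a t) g u v = (\<Sum>z\<in>{u}. DD a t u z * g z v)"
    by (rule sumrow[OF tri_DD assms]) (auto simp: DD_def split: if_splits)
  thus "fi_mult (DD a t) g u v = (if u = a then t else 1) * g u v" by (simp add: DD_def)
qed

lemma mult_DD: assumes "tri g"
  shows "fi_mult g (DD a t) = (\<lambda>u v. g u v * (if v = a then t else 1))"
proof (intro ext)
  fix u v
  have "fi_mult g (DD a t) u v = (\<Sum>z\<in>{v}. g u z * DD a t z v)"
    by (rule sumrow[OF assms tri_DD]) (auto simp: DD_def split: if_splits)
  thus "fi_mult g (DD a t) u v = g u v * (if v = a then t else 1)" by (simp add: DD_def)
qed

lemma EE_mult: assumes "a < b" "tri g"
  shows "fi_mult (EE a b s) g = (\<lambda>u v. g u v + (if u = a then s * g b v else 0))"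
proof (intro ext)
  fix u v
  have "fi_mult (EE a b s) g u v = (\<Sum>z\<in>{u, b}. EE a b s u z * g z v)"
    by (rule sumrow[OF tri_EE assms(2)]) (use assms(1) in \<open>auto simp: EE_def split: if_splits\<close>)
  also have "\<dots> = g u v + (if u = a then s * g b v else 0)"
    using assms(1) by (cases "u = b") (auto simp: EE_def)
  finally show "fi_mult (EE a b s) g u v = g u v + (if u = a then s * g b v else 0)" .
qed

lemma DD_unit: assumes "t \<noteq> 0" shows "DD a t \<in> carrier FI_units"
  unfolding U_mem
proof (intro conjI bexI[of _ "DD a (1/t)"])
  show "fi_mult (DD a (1/t)) (DD a t) = fi_one"
    using assms by (simp add: DD_mult tri_DD, intro ext, auto simp: DD_def fi_one_def)
  show "fi_mult (DD a t) (DD a (1/t)) = fi_one"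
    using assms by (simp add: DD_mult tri_DD, intro ext, auto simp: DD_def fi_one_def)
qed (auto intro: DD_FI)

lemma EE_unit: assumes "a < b" shows "EE a b s \<in> carrier FI_units"
  unfolding U_mem
proof (intro conjI bexI[of _ "EE a b (-s)"])
  show "fi_mult (EE a b (-s)) (EE a b s) = fi_one"
    using assms by (simp add: EE_mult tri_EE less_imp_le, intro ext, auto simp: EE_def fi_one_def)
  show "fi_mult (EE a b s) (EE a b (-s)) = fi_one"
    using assms by (simp add: EE_mult tri_EE less_imp_le, intro ext, auto simp: EE_def fi_one_def)
qed (use assms in \<open>auto intro: EE_FI less_imp_le\<close>)

lemma rel1: assumes "a < b"
  shows "fi_mult (DD a t) (EE a b s) = fi_mult (EE a b ((t-1)*s)) (fi_mult (EE a b s) (DD a t))"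
proof -
  have ab: "a \<noteq> b" using assms by simp
  have 1: "fi_mult (DD a t) (EE a b s) = (\<lambda>u v. (if u = a then t else 1) * EE a b s u v)"
    using assms by (simp add: DD_mult tri_EE less_imp_le)
  have 2: "fi_mult (EE a b s) (DD a t) = (\<lambda>u v. EE a b s u v * (if v = a then t else 1))"
    using assms by (simp add: mult_DD tri_EE less_imp_le)
  have 3: "tri (\<lambda>u v. EE a b s u v * (if v = a then t else 1))"
    using tri_EE[of a b s] assms unfolding tri_def by auto
  show ?thesis unfolding 1 2 EE_mult[OF assms 3]
    using ab by (intro ext) (auto simp: EE_def algebra_simps)
qed

lemma rel2: assumes "a < c" "c < b"
  shows "fi_mult (EE a c s) (EE c b 1) = fi_mult (EE a b s) (fi_mult (EE c b 1) (EE a c s))"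
proof -
  have ab: "a < b" using assms by (rule order.strict_trans)
  have 1: "fi_mult (EE a c s) (EE c b 1) = (\<lambda>u v. EE c b 1 u v + (if u = a then s * EE c b 1 c v else 0))"
    using assms by (simp add: EE_mult tri_EE less_imp_le)
  have 2: "fi_mult (EE c b 1) (EE a c s) = (\<lambda>u v. EE a c s u v + (if u = c then 1 * EE a c s b v else 0))"
    using assms by (simp add: EE_mult tri_EE less_imp_le)
  have 3: "tri (\<lambda>u v. EE a c s u v + (if u = c then 1 * EE a c s b v else 0))"
    using 2 mult_tri by metis
  have ne: "a \<noteq> b" "a \<noteq> c" "c \<noteq> b" using assms ab by auto
  show ?thesis unfolding 1 2 EE_mult[OF ab 3]
    using ne by (intro ext) (auto simp: EE_def algebra_simps)
qed

lemma derived_set_mem: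
  "h1 \<in> H \<Longrightarrow> h2 \<in> H \<Longrightarrow> x = h1 \<otimes>\<^bsub>G\<^esub> h2 \<otimes>\<^bsub>G\<^esub> inv\<^bsub>G\<^esub> h1 \<otimes>\<^bsub>G\<^esub> inv\<^bsub>G\<^esub> h2 \<Longrightarrow> x \<in> derived G H"
  unfolding derived_def by (rule generate.incl) blast

lemma EE_derived1:
  assumes grp: "group (FI_units :: ('a::order \<Rightarrow> 'a \<Rightarrow> 'k::field) monoid)"
    and t: "(t::'k) \<noteq> 0" "t \<noteq> 1" and ab: "a < b"
  shows "(EE a b s :: 'a \<Rightarrow> 'a \<Rightarrow> 'k) \<in> derived FI_units (carrier FI_units)"
proof -
  interpret G: group "FI_units :: ('a \<Rightarrow> 'a \<Rightarrow> 'k) monoid" by fact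
  define s' where "s' = s / (t - 1)"
  have s: "(t - 1) * s' = s" using t unfolding s'_def by simp
  have x: "DD a t \<in> carrier FI_units" using DD_unit t by blast
  have y: "EE a b s' \<in> carrier FI_units" using EE_unit ab by blast
  have e: "EE a b s \<in> carrier FI_units" using EE_unit ab by blast
  have "DD a t \<otimes>\<^bsub>FI_units\<^esub> EE a b s' = EE a b s \<otimes>\<^bsub>FI_units\<^esub> (EE a b s' \<otimes>\<^bsub>FI_units\<^esub> DD a t)"
    using rel1[OF ab, of t s'] s by (simp add: U_mult)
  hence "DD a t \<otimes>\<^bsub>FI_units\<^esub> EE a b s' \<otimes>\<^bsub>FI_units\<^esub> inv\<^bsub>FI_units\<^esub> DD a t \<otimes>\<^bsub>FI_units\<^esub> inv\<^bsub>FI_units\<^esub> EE a b s' = EE a b s"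
    by (rule G.comm_val[OF x y e])
  thus ?thesis using x y by (intro derived_set_mem[of "DD a t" _ "EE a b s'"]) auto
qed

lemma EE_derived:
  assumes grp: "group (FI_units :: ('a::order \<Rightarrow> 'a \<Rightarrow> 'k::field) monoid)"
    and t: "(t::'k) \<noteq> 0" "t \<noteq> 1"
  shows "P (2^k) a b \<Longrightarrow> (EE a b s :: 'a \<Rightarrow> 'a \<Rightarrow> 'k) \<in> (derived FI_units ^^ Suc k) (carrier FI_units)"
proof (induction k arbitrary: a b s)
  case (0 a b s)
  hence ab: "a < b" using P_Suc_less by (metis One_nat_def power_0)
  show ?case using EE_derived1[OF grp t ab] by simp
next
  case (Suc k a b s)
  interpret G: group "FI_units :: ('a \<Rightarrow> 'a \<Rightarrow> 'k) monoid" by fact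
  have "P (2^k + 2^k) a b" using Suc.prems by (simp only: power_Suc mult_2)
  then obtain c where c: "P (2^k) a c" "P (2^k) c b" using P_split by blast
  have k1: "(2::nat)^k = Suc (2^k - 1)" by simp
  have ac: "a < c" using c(1) k1 P_Suc_less by metis
  have cb: "c < b" using c(2) k1 P_Suc_less by metis
  have ab: "a < b" using ac cb by (rule order.strict_trans)
  have x: "(EE a c s :: 'a \<Rightarrow> 'a \<Rightarrow> 'k) \<in> (derived FI_units ^^ Suc k) (carrier FI_units)"
    using Suc.IH c(1) by blast
  have y: "(EE c b 1 :: 'a \<Rightarrow> 'a \<Rightarrow> 'k) \<in> (derived FI_units ^^ Suc k) (carrier FI_units)"
    using Suc.IH c(2) by blast
  have xc: "EE a c s \<in> carrier FI_units" using EE_unit ac by blast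
  have yc: "EE c b 1 \<in> carrier FI_units" using EE_unit cb by blast
  have ec: "EE a b s \<in> carrier FI_units" using EE_unit ab by blast
  have "EE a c s \<otimes>\<^bsub>FI_units\<^esub> EE c b 1 = EE a b s \<otimes>\<^bsub>FI_units\<^esub> (EE c b 1 \<otimes>\<^bsub>FI_units\<^esub> EE a c s)"
    using rel2[OF ac cb, of s] by (simp add: U_mult)
  hence "EE a c s \<otimes>\<^bsub>FI_units\<^esub> EE c b 1 \<otimes>\<^bsub>FI_units\<^esub> inv\<^bsub>FI_units\<^esub> EE a c s \<otimes>\<^bsub>FI_units\<^esub> inv\<^bsub>FI_units\<^esub> EE c b 1 = (EE a b s :: 'a \<Rightarrow> 'a \<Rightarrow> 'k)"
    by (rule G.comm_val[OF xc yc ec])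
  hence "(EE a b s :: 'a \<Rightarrow> 'a \<Rightarrow> 'k) \<in> derived FI_units ((derived FI_units ^^ Suc k) (carrier FI_units))"
    using x y by (intro derived_set_mem[of "EE a c s" _ "EE c b 1"]) auto
  thus ?case by simp
qed



lemma part2:
  assumes solv: "solvable (FI_units :: ('a::order \<Rightarrow> 'a \<Rightarrow> 'k::field) monoid)"
    and card2: "card (UNIV :: 'k set) \<noteq> 2"
  shows "\<exists>m::nat. poset_length TYPE('a) = enat m \<and>
               int (derived_length (FI_units :: ('a \<Rightarrow> 'a \<Rightarrow> 'k) monoid)) = \<lceil>log 2 (real m + 1)\<rceil> + 1"
proof -
  have grp: "group (FI_units :: ('a \<Rightarrow> 'a \<Rightarrow> 'k) monoid)" by (rule FI_units_group)
  interpret G: group "FI_units :: ('a \<Rightarrow> 'a \<Rightarrow> 'k) monoid" by (rule grp)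
  obtain n where n: "(derived (FI_units :: ('a \<Rightarrow> 'a \<Rightarrow> 'k) monoid) ^^ n) (carrier FI_units) = {fi_one}"
    using G.solvable_iff_trivial_derived_seq solv by (auto simp: U_one)
  have "\<exists>t::'k. t \<noteq> 0 \<and> t \<noteq> 1"
  proof (rule ccontr)
    assume "\<not> (\<exists>t::'k. t \<noteq> 0 \<and> t \<noteq> 1)"
    hence U: "(UNIV :: 'k set) = {0, 1}" by auto
    have "card {0::'k, 1} = 2" by simp
    thus False using card2 U by metis
  qed
  then obtain t :: 'k where t: "t \<noteq> 0" "t \<noteq> 1" by blast
  have DD_ne: "(DD a t :: 'a \<Rightarrow> 'a \<Rightarrow> 'k) \<noteq> fi_one" for a
  proof
    assume "(DD a t :: 'a \<Rightarrow> 'a \<Rightarrow> 'k) = fi_one"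
    hence "(DD a t :: 'a \<Rightarrow> 'a \<Rightarrow> 'k) a a = fi_one a a" by simp
    thus False using t by (simp add: DD_def fi_one_def)
  qed
  have EE_ne: "(EE a b 1 :: 'a \<Rightarrow> 'a \<Rightarrow> 'k) \<noteq> fi_one" if "a < b" for a b
  proof
    assume "(EE a b 1 :: 'a \<Rightarrow> 'a \<Rightarrow> 'k) = fi_one"
    hence "(EE a b 1 :: 'a \<Rightarrow> 'a \<Rightarrow> 'k) a b = fi_one a b" by simp
    moreover have "a \<noteq> b" using that by simp
    ultimately show False by (simp add: EE_def fi_one_def)
  qed
  have carr: "\<exists>h \<in> carrier (FI_units :: ('a \<Rightarrow> 'a \<Rightarrow> 'k) monoid). h \<noteq> fi_one"
    using DD_unit[OF t(1), of undefined] DD_ne by blast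
  have n0: "n \<noteq> 0"
  proof
    assume "n = 0"
    hence "carrier (FI_units :: ('a \<Rightarrow> 'a \<Rightarrow> 'k) monoid) = {fi_one}" using n by simp
    thus False using carr by blast
  qed
  have bound: "k \<le> 2^n" if "P k (x::'a) y" for k x y
  proof (rule ccontr)
    assume "\<not> k \<le> 2^n"
    moreover have "(2::nat)^(n-1) \<le> 2^n" by (rule power_increasing) auto
    ultimately have "2^(n-1) \<le> k" by linarith
    hence P1: "P (2^(n-1)) x y" using that P_le_k' by blast
    have k1: "(2::nat)^(n-1) = Suc (2^(n-1) - 1)" by simp
    have xy: "x < y" using P1 k1 P_Suc_less by metis
    have "(EE x y 1 :: 'a \<Rightarrow> 'a \<Rightarrow> 'k) \<in> (derived FI_units ^^ Suc (n-1)) (carrier FI_units)"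
      by (rule EE_derived[OF grp t P1])
    hence "(EE x y 1 :: 'a \<Rightarrow> 'a \<Rightarrow> 'k) \<in> (derived FI_units ^^ n) (carrier FI_units)" using n0 by simp
    thus False using n EE_ne[OF xy] by blast
  qed
  obtain m where m: "poset_length TYPE('a) = enat m" using PL_bounded bound by blast
  obtain c where c: "\<lceil>log 2 (real m + 1)\<rceil> = int c" "m < 2^c" "c \<ge> 1 \<longrightarrow> 2^(c-1) \<le> m"
    using log_ceil by blast
  obtain x0 y0 :: 'a where xy: "P m x0 y0" using PL_attained[OF m] by blast
  have noP: "\<not> P (2^c) a b" for a b :: 'a
  proof
    assume "P (2^c) a b"
    hence "enat (2^c) \<le> enat m" using P_PL m by metis
    thus False using c(2) by simp
  qed
  have top: "(derived (FI_units :: ('a \<Rightarrow> 'a \<Rightarrow> 'k) monoid) ^^ Suc c) (carrier FI_units) = {fi_one}"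
  proof
    show "(derived (FI_units :: ('a \<Rightarrow> 'a \<Rightarrow> 'k) monoid) ^^ Suc c) (carrier FI_units) \<subseteq> {fi_one}"
      using derived_V[OF grp, of c] V_top[OF noP] by blast
    have "\<one>\<^bsub>FI_units\<^esub> \<in> derived (FI_units :: ('a \<Rightarrow> 'a \<Rightarrow> 'k) monoid) ((derived FI_units ^^ c) (carrier FI_units))"
      unfolding derived_def by (rule generate.one)
    thus "{fi_one} \<subseteq> (derived (FI_units :: ('a \<Rightarrow> 'a \<Rightarrow> 'k) monoid) ^^ Suc c) (carrier FI_units)"
      by (simp add: U_one)
  qed
  have low: "\<exists>h \<in> (derived (FI_units :: ('a \<Rightarrow> 'a \<Rightarrow> 'k) monoid) ^^ j) (carrier FI_units). h \<noteq> fi_one"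
    if "j \<le> c" for j
  proof (cases j)
    case 0 thus ?thesis using carr by simp
  next
    case (Suc i)
    hence "c \<ge> 1" using that by simp
    hence "2^(c-1) \<le> m" using c(3) by simp
    moreover have "(2::nat)^i \<le> 2^(c-1)" by (rule power_increasing) (use Suc that in auto)
    ultimately have "2^i \<le> m" by linarith
    hence P1: "P (2^i) x0 y0" using xy P_le_k' by blast
    have k1: "(2::nat)^i = Suc (2^i - 1)" by simp
    have lt: "x0 < y0" using P1 k1 P_Suc_less by metis
    have "(EE x0 y0 1 :: 'a \<Rightarrow> 'a \<Rightarrow> 'k) \<in> (derived FI_units ^^ Suc i) (carrier FI_units)"
      by (rule EE_derived[OF grp t P1])
    thus ?thesis using Suc EE_ne[OF lt] by blast
  qed
  have dl: "derived_length (FI_units :: ('a \<Rightarrow> 'a \<Rightarrow> 'k) monoid) = Suc c"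
    unfolding derived_length_def U_one
  proof (rule Least_equality)
    show "(derived (FI_units :: ('a \<Rightarrow> 'a \<Rightarrow> 'k) monoid) ^^ Suc c) (carrier FI_units) = {fi_one}" by (rule top)
    fix y assume y: "(derived (FI_units :: ('a \<Rightarrow> 'a \<Rightarrow> 'k) monoid) ^^ y) (carrier FI_units) = {fi_one}"
    show "Suc c \<le> y"
    proof (rule ccontr)
      assume "\<not> Suc c \<le> y"
      hence "y \<le> c" by simp
      thus False using low[of y] y by blast
    qed
  qed
  show ?thesis using m c(1) dl by auto
qed


theorem corollary1p5:
  shows "(FI_lie_solvable TYPE('a::order \<Rightarrow> 'a \<Rightarrow> 'k) \<longrightarrow>
            (\<exists>m::nat. poset_length TYPE('a) = enat m \<and>
               int (dl_Lie TYPE('a \<Rightarrow> 'a \<Rightarrow> 'k)) = \<lceil>log 2 (real m + 1)\<rceil> + 1 \<and>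
               int (dl_strong_Lie TYPE('a \<Rightarrow> 'a \<Rightarrow> 'k)) = \<lceil>log 2 (real m + 1)\<rceil> + 1))
       \<and> (solvable (FI_units :: ('a \<Rightarrow> 'a \<Rightarrow> 'k) monoid) \<and> card (UNIV :: 'k::field set) \<noteq> 2 \<longrightarrow>
            (\<exists>m::nat. poset_length TYPE('a) = enat m \<and>
               int (derived_length (FI_units :: ('a \<Rightarrow> 'a \<Rightarrow> 'k) monoid)) = \<lceil>log 2 (real m + 1)\<rceil> + 1))"
  using part1 part2 by blast

end
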